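(* Given a forking problem (with any finite number of alternatives and monotonic preferences given explicitly as total orders) and an assignment $f$, one can decide in polynomial time whether $f$ is stable.
   Context: A forking problem consists of agents $V=\{v_1,\dots,v_n\}$ and a finite set $M$ of alternatives. Each agent $v_i$ has a strict total order $\succ_i$ on $M\times\{1,\dots,n\}$, where $(S,j)$ means being in the community adopting alternative $S$, of size $j$; it is monotonic if $(S,j)\succ_i(S,k)$ for all $S\in M$ and $1\le k<j\le n$. An assignment is a map $f:V\to M$; $v_i$ prefers $f$ to $g$ if $(f(v_i),|f^{-1}(f(v_i))|)\succ_i(g(v_i),|g^{-1}(g(v_i))|)$. An assignment $f$ is stable if there is no assignment $f'\neq f$ such that every agent $v_i$ with $f'(v_i)\neq f(v_i)$ prefers $f'$ to $f$. *)

theory Defs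
  imports Main
begin

text \<open>
  Agents are 0,...,n-1, alternatives are 0,...,m-1 (so M is the finite set {0..<m}).
  A forking problem instance is given explicitly by
    m :: nat                           the number of alternatives,
    P :: (nat \<times> nat) list list        P ! i is the preference order of agent i, written as the
                                       list of all pairs (S,j) in M \<times> {1..n}, best first,
  and an assignment is a list F :: nat list with F ! i the alternative of agent i.
  n = length P = length F.
\<close>

definition valid_instance :: "nat \<Rightarrow> (nat \<times> nat) list list \<Rightarrow> nat list \<Rightarrow> bool" where
  "valid_instance m P F \<longleftrightarrow>
     length P = length F \<and>
     (\<forall>i < length P. distinct (P ! i) \<and> set (P ! i) = {0..<m} \<times> {1..length P}) \<and>
     (\<forall>i < length F. F ! i < m)"

definition prefers :: "(nat \<times> nat) list list \<Rightarrow> nat \<Rightarrow> nat \<times> nat \<Rightarrow> nat \<times> nat \<Rightarrow> bool" where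
  "prefers P i a b \<longleftrightarrow> (\<exists>p q. p < q \<and> q < length (P ! i) \<and> P ! i ! p = a \<and> P ! i ! q = b)"

definition monotonic_prefs :: "nat \<Rightarrow> (nat \<times> nat) list list \<Rightarrow> bool" where
  "monotonic_prefs m P \<longleftrightarrow>
     (\<forall>i < length P. \<forall>S < m. \<forall>j k. 1 \<le> k \<and> k < j \<and> j \<le> length P \<longrightarrow> prefers P i (S, j) (S, k))"

definition comm_size :: "nat list \<Rightarrow> nat \<Rightarrow> nat" where
  "comm_size g v = card {w. w < length g \<and> g ! w = g ! v}"

definition is_assignment :: "nat \<Rightarrow> nat \<Rightarrow> nat list \<Rightarrow> bool" where
  "is_assignment m n g \<longleftrightarrow> length g = n \<and> (\<forall>i < n. g ! i < m)"

definition stable :: "nat \<Rightarrow> (nat \<times> nat) list list \<Rightarrow> nat list \<Rightarrow> bool" where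
  "stable m P F \<longleftrightarrow>
     \<not> (\<exists>g. is_assignment m (length F) g \<and> g \<noteq> F \<and>
            (\<forall>v < length F. g ! v \<noteq> F ! v \<longrightarrow>
               prefers P v (g ! v, comm_size g v) (F ! v, comm_size F v)))"

definition input_size :: "nat \<Rightarrow> (nat \<times> nat) list list \<Rightarrow> nat list \<Rightarrow> nat" where
  "input_size m P F = m + length F + sum_list (map length P)"

fun len :: "'a list \<Rightarrow> nat" where
  "len [] = 0"
| "len (x # xs) = Suc (len xs)"

fun pos_of :: "(nat \<times> nat) list \<Rightarrow> nat \<Rightarrow> nat \<Rightarrow> nat" where
  "pos_of [] a b = 0"
| "pos_of ((x, y) # r) a b = (if x = a \<and> y = b then 0 else Suc (pos_of r a b))"

fun better :: "(nat \<times> nat) list \<Rightarrow> nat \<Rightarrow> nat \<Rightarrow> nat \<Rightarrow> nat \<Rightarrow> bool" where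
  "better L a b c d = (pos_of L a b < pos_of L c d)"

fun count_eq :: "nat list \<Rightarrow> nat \<Rightarrow> nat" where
  "count_eq [] S = 0"
| "count_eq (x # xs) S = (if x = S then Suc (count_eq xs S) else count_eq xs S)"

fun count_movers :: "(nat \<times> nat) list list \<Rightarrow> nat list \<Rightarrow> nat list \<Rightarrow> nat \<Rightarrow> nat \<Rightarrow> nat" where
  "count_movers [] xs F S s = 0"
| "count_movers (L # Ls) [] F S s = 0"
| "count_movers (L # Ls) (x # xs) F S s =
     (if x \<noteq> S \<and> better L S s x (count_eq F x)
      then Suc (count_movers Ls xs F S s) else count_movers Ls xs F S s)"

fun blockS :: "(nat \<times> nat) list list \<Rightarrow> nat list \<Rightarrow> nat \<Rightarrow> nat \<Rightarrow> nat \<Rightarrow> bool" where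
  "blockS P F S c 0 = False"
| "blockS P F S c (Suc k) = (Suc k \<le> count_movers P F F S (c + Suc k) \<or> blockS P F S c k)"

fun blockAny :: "(nat \<times> nat) list list \<Rightarrow> nat list \<Rightarrow> nat \<Rightarrow> bool" where
  "blockAny P F 0 = False"
| "blockAny P F (Suc S) = (blockS P F S (count_eq F S) (len F) \<or> blockAny P F S)"

fun decide_stable :: "nat \<Rightarrow> (nat \<times> nat) list list \<Rightarrow> nat list \<Rightarrow> bool" where
  "decide_stable m P F = (\<not> blockAny P F m)"

text \<open>
  Written by hand, following the translation of Nipkow et al. (Functional Data Structures and
  Algorithms, Sec. 1.5, as implemented by the time_fun command of HOL-Library): every call of a
  user-defined function costs 1 plus the cost of the user-defined calls it makes; constructors
  and the primitive operations +, <, \<le>, =, \<not>, \<and>, \<or> on natural numbers cost 0 (unit-cost RAM).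
  All calls occurring in a defining equation are counted (strict evaluation).
\<close>

fun T_len :: "'a list \<Rightarrow> nat" where
  "T_len [] = 1"
| "T_len (x # xs) = T_len xs + 1"

fun T_pos_of :: "(nat \<times> nat) list \<Rightarrow> nat \<Rightarrow> nat \<Rightarrow> nat" where
  "T_pos_of [] a b = 1"
| "T_pos_of ((x, y) # r) a b = (if x = a \<and> y = b then 1 else T_pos_of r a b + 1)"

fun T_better :: "(nat \<times> nat) list \<Rightarrow> nat \<Rightarrow> nat \<Rightarrow> nat \<Rightarrow> nat \<Rightarrow> nat" where
  "T_better L a b c d = T_pos_of L a b + T_pos_of L c d + 1"

fun T_count_eq :: "nat list \<Rightarrow> nat \<Rightarrow> nat" where
  "T_count_eq [] S = 1"
| "T_count_eq (x # xs) S = T_count_eq xs S + 1"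

fun T_count_movers :: "(nat \<times> nat) list list \<Rightarrow> nat list \<Rightarrow> nat list \<Rightarrow> nat \<Rightarrow> nat \<Rightarrow> nat" where
  "T_count_movers [] xs F S s = 1"
| "T_count_movers (L # Ls) [] F S s = 1"
| "T_count_movers (L # Ls) (x # xs) F S s =
     T_count_eq F x + T_better L S s x (count_eq F x) + T_count_movers Ls xs F S s + 1"

fun T_blockS :: "(nat \<times> nat) list list \<Rightarrow> nat list \<Rightarrow> nat \<Rightarrow> nat \<Rightarrow> nat \<Rightarrow> nat" where
  "T_blockS P F S c 0 = 1"
| "T_blockS P F S c (Suc k) = T_count_movers P F F S (c + Suc k) + T_blockS P F S c k + 1"

fun T_blockAny :: "(nat \<times> nat) list list \<Rightarrow> nat list \<Rightarrow> nat \<Rightarrow> nat" where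
  "T_blockAny P F 0 = 1"
| "T_blockAny P F (Suc S) =
     T_count_eq F S + T_len F + T_blockS P F S (count_eq F S) (len F) + T_blockAny P F S + 1"

fun T_decide_stable :: "nat \<Rightarrow> (nat \<times> nat) list list \<Rightarrow> nat list \<Rightarrow> nat" where
  "T_decide_stable m P F = T_blockAny P F m + 1"

end

theory Submission
  imports Defs
begin

lemma pos_in: "(a,b) \<in> set L \<Longrightarrow> pos_of L a b < length L \<and> L ! pos_of L a b = (a,b)"
  by (induction L a b rule: pos_of.induct) auto

lemma pos_notin: "(a,b) \<notin> set L \<Longrightarrow> pos_of L a b = length L"
  by (induction L a b rule: pos_of.induct) auto

lemma pos_nth: "distinct L \<Longrightarrow> p < length L \<Longrightarrow> L ! p = (a,b) \<Longrightarrow> pos_of L a b = p"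
  by (metis nth_eq_iff_index_eq nth_mem pos_in)

lemma prefers_iff:
  assumes "distinct (P ! i)"
  shows "prefers P i (a,b) (c,d) \<longleftrightarrow> (a,b) \<in> set (P!i) \<and> (c,d) \<in> set (P!i) \<and>
           pos_of (P!i) a b < pos_of (P!i) c d"
proof
  assume "prefers P i (a,b) (c,d)"
  then obtain p q where "p < q" "q < length (P ! i)" "P ! i ! p = (a,b)" "P ! i ! q = (c,d)"
    unfolding prefers_def by blast
  then show "(a,b) \<in> set (P!i) \<and> (c,d) \<in> set (P!i) \<and> pos_of (P!i) a b < pos_of (P!i) c d"
    using pos_nth[OF assms] by (metis nth_mem order.strict_trans)
next
  assume "(a,b) \<in> set (P!i) \<and> (c,d) \<in> set (P!i) \<and> pos_of (P!i) a b < pos_of (P!i) c d"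
  then show "prefers P i (a,b) (c,d)" unfolding prefers_def using pos_in by metis
qed

lemma better_iff:
  assumes "distinct (P ! i)" "(c,d) \<in> set (P!i)"
  shows "better (P!i) a b c d \<longleftrightarrow> prefers P i (a,b) (c,d)"
proof -
  have "(a,b) \<notin> set (P!i) \<Longrightarrow> \<not> pos_of (P!i) a b < pos_of (P!i) c d"
    using pos_notin pos_in assms(2) by fastforce
  then show ?thesis using prefers_iff[OF assms(1)] assms(2) by auto
qed

lemma prefers_trans:
  assumes "distinct (P ! i)" "prefers P i x y" "prefers P i y z"
  shows "prefers P i x z"
  using assms prefers_iff[OF assms(1)] by (cases x; cases y; cases z) auto

lemma count_eq_filter: "count_eq xs x = length (filter (\<lambda>y. y = x) xs)"
  by (induction xs) auto

lemma count_eq_card: "count_eq xs x = card {w. w < length xs \<and> xs ! w = x}"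
  by (simp add: count_eq_filter length_filter_conv_card)

lemma len_eq: "len xs = length xs"
  by (induction xs) auto

lemma count_movers_filter:
  "count_movers Ls xs F S s =
     length (filter (\<lambda>(L,x). x \<noteq> S \<and> better L S s x (count_eq F x)) (zip Ls xs))"
  by (induction Ls xs F S s rule: count_movers.induct) auto

lemma count_movers_card:
  assumes "length Ls = length xs"
  shows "count_movers Ls xs F S s =
     card {v. v < length xs \<and> xs!v \<noteq> S \<and> better (Ls!v) S s (xs!v) (count_eq F (xs!v))}"
  unfolding count_movers_filter length_filter_conv_card using assms
  by (intro arg_cong[where f=card]) (auto simp del: better.simps)

lemma blockS_iff: "blockS P F S c n \<longleftrightarrow> (\<exists>k. 1 \<le> k \<and> k \<le> n \<and> k \<le> count_movers P F F S (c + k))"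
  by (induction n) (auto simp: le_Suc_eq)

lemma blockAny_iff: "blockAny P F m \<longleftrightarrow> (\<exists>S < m. blockS P F S (count_eq F S) (len F))"
  by (induction m) (auto simp: less_Suc_eq)


lemma size_in:
  assumes "valid_instance m P F" "v < length F"
  shows "(F!v, comm_size F v) \<in> set (P!v)"
proof -
  have "v \<in> {w. w < length F \<and> F ! w = F ! v}" using assms(2) by simp
  then have "card {w. w < length F \<and> F ! w = F ! v} \<ge> 1"
    by (metis (no_types, lifting) One_nat_def Suc_leI card_gt_0_iff empty_iff finite_nat_set_iff_bounded mem_Collect_eq)
  moreover have "card {w. w < length F \<and> F ! w = F ! v} \<le> length F"
    by (rule order.trans[OF card_mono[of "{..<length F}"]]) auto
  ultimately show ?thesis using assms unfolding valid_instance_def comm_size_def by auto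
qed

definition Mv where
  "Mv P F S s = {v. v < length F \<and> F!v \<noteq> S \<and> prefers P v (S,s) (F!v, comm_size F v)}"

lemma count_movers_Mv:
  assumes "valid_instance m P F"
  shows "count_movers P F F S s = card (Mv P F S s)"
proof -
  have L: "length P = length F" using assms by (simp add: valid_instance_def)
  show ?thesis unfolding count_movers_card[OF L] Mv_def
  proof (intro arg_cong[where f=card] Collect_cong conj_cong refl)
    fix v assume "v < length F" "F ! v \<noteq> S"
    moreover have "count_eq F (F!v) = comm_size F v" by (simp add: count_eq_card comm_size_def)
    ultimately show "better (P ! v) S s (F ! v) (count_eq F (F ! v)) = prefers P v (S, s) (F ! v, comm_size F v)"
      using better_iff[of P v "F!v" "comm_size F v"] size_in[OF assms] assms L
      unfolding valid_instance_def by (metis (no_types, lifting))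
  qed
qed

lemma decide_iff:
  assumes "valid_instance m P F"
  shows "decide_stable m P F \<longleftrightarrow>
     \<not> (\<exists>S<m. \<exists>k. 1 \<le> k \<and> k \<le> length F \<and> k \<le> card (Mv P F S (card {w. w < length F \<and> F!w = S} + k)))"
  using count_movers_Mv[OF assms]
  by (simp add: blockAny_iff blockS_iff len_eq count_eq_card del: better.simps)


lemma unstable_imp:
  assumes V: "valid_instance m P F" and Mo: "monotonic_prefs m P"
    and g: "is_assignment m (length F) g" "g \<noteq> F"
    and pr: "\<forall>v < length F. g ! v \<noteq> F ! v \<longrightarrow>
               prefers P v (g ! v, comm_size g v) (F ! v, comm_size F v)"
  shows "\<exists>S<m. \<exists>k. 1 \<le> k \<and> k \<le> length F \<and> k \<le> card (Mv P F S (card {w. w < length F \<and> F!w = S} + k))"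
proof -
  let ?n = "length F"
  have lg: "length g = ?n" using g by (simp add: is_assignment_def)
  obtain v0 where v0: "v0 < ?n" "g!v0 \<noteq> F!v0" using g(2) lg nth_equalityI by metis
  define S where "S = g!v0"
  have Sm: "S < m" using g v0 by (simp add: is_assignment_def S_def)
  define X where "X = {v. v < ?n \<and> g!v = S \<and> F!v \<noteq> S}"
  define C where "C = {w. w < ?n \<and> F!w = S}"
  define k where "k = card X"
  have fX: "finite X" and fC: "finite C" unfolding X_def C_def by auto
  have v0X: "v0 \<in> X" using v0 unfolding X_def S_def by auto
  then have k1: "1 \<le> k" unfolding k_def using fX
    by (metis One_nat_def Suc_leI card_gt_0_iff empty_iff)
  have disj: "C \<inter> X = {}" unfolding C_def X_def by auto
  have "card (C \<union> X) \<le> ?n"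
    by (rule order.trans[OF card_mono[of "{..<?n}"]]) (auto simp: C_def X_def)
  then have ckn: "card C + k \<le> ?n" using card_Un_disjoint[OF fC fX disj] k_def by simp
  then have kn: "k \<le> ?n" by simp
  have sub: "X \<subseteq> Mv P F S (card C + k)"
  proof
    fix v assume vX: "v \<in> X"
    then have vn: "v < ?n" and gv: "g!v = S" and Fv: "F!v \<noteq> S" unfolding X_def by auto
    have dist: "distinct (P!v)" using V vn by (simp add: valid_instance_def)
    have p1: "prefers P v (S, comm_size g v) (F ! v, comm_size F v)" using pr vn gv Fv by metis
    have "{w. w < length g \<and> g ! w = g ! v} \<subseteq> C \<union> X" using lg gv unfolding C_def X_def by auto
    then have gs: "comm_size g v \<le> card C + k"
      unfolding comm_size_def k_def card_Un_disjoint[OF fC fX disj, symmetric]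
      using fC fX by (simp add: card_mono)
    have gs1: "1 \<le> comm_size g v"
    proof -
      have "v \<in> {w. w < length g \<and> g ! w = g ! v}" using lg vn by simp
      then show ?thesis unfolding comm_size_def
        by (metis (no_types, lifting) One_nat_def Suc_leI card_gt_0_iff empty_iff finite_nat_set_iff_bounded mem_Collect_eq)
    qed
    have "prefers P v (S, card C + k) (F ! v, comm_size F v)"
    proof (cases "comm_size g v = card C + k")
      case True then show ?thesis using p1 by simp
    next
      case False
      then have "prefers P v (S, card C + k) (S, comm_size g v)"
        using Mo Sm vn V gs gs1 ckn unfolding monotonic_prefs_def valid_instance_def by auto
      then show ?thesis using prefers_trans[OF dist] p1 by blast
    qed
    then show "v \<in> Mv P F S (card C + k)" unfolding Mv_def using vn Fv by auto
  qed
  have "finite (Mv P F S (card C + k))" unfolding Mv_def by auto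
  then have "k \<le> card (Mv P F S (card C + k))" using card_mono[OF _ sub] k_def by simp
  then show ?thesis using Sm k1 kn unfolding C_def by blast
qed

lemma imp_unstable:
  assumes V: "valid_instance m P F"
    and Sm: "S < m" and k: "1 \<le> k" "k \<le> card (Mv P F S (card {w. w < length F \<and> F!w = S} + k))"
  shows "\<not> stable m P F"
proof -
  let ?n = "length F"
  define C where "C = {w. w < ?n \<and> F!w = S}"
  have fM: "finite (Mv P F S (card C + k))" unfolding Mv_def by auto
  obtain X where X: "X \<subseteq> Mv P F S (card C + k)" "card X = k"
    using obtain_subset_with_card_n k(2) unfolding C_def by metis
  have fX: "finite X" using X fM finite_subset by blast
  define g where "g = map (\<lambda>v. if v \<in> X then S else F!v) [0..<?n]"
  have lg: "length g = ?n" by (simp add: g_def)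
  have Xn: "\<And>v. v \<in> X \<Longrightarrow> v < ?n \<and> F!v \<noteq> S \<and> prefers P v (S, card C + k) (F!v, comm_size F v)"
    using X(1) unfolding Mv_def by auto
  have gv: "\<And>v. v < ?n \<Longrightarrow> g!v = (if v \<in> X then S else F!v)" by (simp add: g_def)
  have asg: "is_assignment m ?n g" using lg gv Sm V unfolding is_assignment_def valid_instance_def by auto
  obtain v0 where "v0 \<in> X" using k X by (metis card.empty ex_in_conv not_one_le_zero)
  then have "g!v0 \<noteq> F!v0" using Xn gv by auto
  then have neq: "g \<noteq> F" by auto
  have disj: "C \<inter> X = {}" using Xn unfolding C_def by auto
  have eqset: "{w. w < length g \<and> g ! w = S} = C \<union> X" using lg gv Xn unfolding C_def by auto
  have "\<forall>v < ?n. g ! v \<noteq> F ! v \<longrightarrow> prefers P v (g ! v, comm_size g v) (F ! v, comm_size F v)"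
  proof (intro allI impI)
    fix v assume "v < ?n" "g!v \<noteq> F!v"
    then have vX: "v \<in> X" and gS: "g!v = S" using gv by (auto split: if_splits)
    have "comm_size g v = card C + k" unfolding comm_size_def gS eqset
      using card_Un_disjoint[OF _ fX disj] X(2) by (simp add: C_def)
    then show "prefers P v (g ! v, comm_size g v) (F ! v, comm_size F v)" using Xn[OF vX] gS by simp
  qed
  then show ?thesis unfolding stable_def using asg neq by blast
qed

lemma correct:
  assumes "valid_instance m P F" "monotonic_prefs m P"
  shows "decide_stable m P F = stable m P F"
  unfolding decide_iff[OF assms(1)]
  using unstable_imp[OF assms] imp_unstable[OF assms(1)] unfolding stable_def by blast



lemma T_pos_le: "T_pos_of L a b \<le> length L + 1"
  by (induction L a b rule: T_pos_of.induct) auto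

lemma T_count_eq_eq: "T_count_eq xs S = length xs + 1"
  by (induction xs) auto

lemma T_len_eq: "T_len xs = length xs + 1"
  by (induction xs) auto

lemma T_cm_le:
  "(\<forall>L\<in>set Ls. length L \<le> B) \<Longrightarrow> T_count_movers Ls xs F S s \<le> (length Ls + 1) * (length F + 2*B + 5)"
proof (induction Ls xs F S s rule: T_count_movers.induct)
  case (3 L Ls x xs F S s)
  have a1: "T_pos_of L S s \<le> B + 1" and a2: "T_pos_of L x (count_eq F x) \<le> B + 1"
    using T_pos_le[of L] 3(2) by (meson add_right_mono dual_order.trans list.set_intros(1))+
  have "T_better L S s x (count_eq F x) \<le> 2*B + 3" using a1 a2 by simp
  then show ?case using 3 by (simp add: T_count_eq_eq)
qed auto

lemma T_blockS_le:
  "(\<forall>s. T_count_movers P F F S s \<le> X) \<Longrightarrow> T_blockS P F S c k \<le> (k+1)*(X+1)"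
proof (induction k)
  case (Suc k)
  have cm: "T_count_movers P F F S (Suc (c + k)) \<le> X" using Suc(2) by blast
  have ih: "T_blockS P F S c k \<le> (k+1)*(X+1)" using Suc by blast
  show ?case using cm ih by (simp add: algebra_simps)
qed simp


lemma T_blockAny_le:
  "(\<forall>S' c. T_blockS P F S' c (length F) \<le> Y) \<Longrightarrow> T_blockAny P F S \<le> (S+1)*(2*length F + Y + 3)"
proof (induction S)
  case (Suc S)
  have cm: "T_blockS P F S (count_eq F S) (length F) \<le> Y" using Suc(2) by blast
  have ih: "T_blockAny P F S \<le> (S+1)*(2*length F + Y + 3)" using Suc by blast
  show ?case using cm ih by (simp add: algebra_simps T_count_eq_eq T_len_eq len_eq)
qed simp

lemma poly: "(N::nat) \<ge> 1 \<Longrightarrow> (N+1)*(2*N+(N+1)*((N+1)*(3*N+5)+1)+3)+1 \<le> 100*N^4"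
proof -
  assume N1: "N \<ge> 1"
  have b1: "N + 1 \<le> 2*N" using N1 by simp
  have "(N+1)*(3*N+5) \<le> (2*N)*(8*N)" using N1 by (intro mult_le_mono) auto
  then have c1: "(N+1)*(3*N+5) + 1 \<le> 17*(N*N)" using N1
    by (simp add: algebra_simps)
  have d1: "(N+1)*((N+1)*(3*N+5) + 1) \<le> (2*N)*(17*(N*N))" using c1 b1 by (intro mult_le_mono)
  have d2: "(2*N)*(17*(N*N)) = 34*(N*N*N)" by simp
  have d3: "N \<le> N*N*N" "1 \<le> N*N*N" using N1 by simp_all
  have c2: "2*N+(N+1)*((N+1)*(3*N+5)+1)+3 \<le> 39*(N*N*N)"
    using d1 d2 d3 by linarith
  have "(N+1)*(2*N+(N+1)*((N+1)*(3*N+5)+1)+3) \<le> (2*N)*(39*(N*N*N))" using c2 b1 by (intro mult_le_mono)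
  moreover have "(2*N)*(39*(N*N*N)) = 78 * N^4" by (simp add: power4_eq_xxxx)
  moreover have "1 \<le> N^4" using N1 by simp
  ultimately show ?thesis by linarith
qed

theorem proposition4:
  "\<exists>c d :: nat. \<forall>m P F.
     valid_instance m P F \<and> monotonic_prefs m P \<longrightarrow>
       decide_stable m P F = stable m P F \<and>
       T_decide_stable m P F \<le> c * (input_size m P F + 1) ^ d"
proof (intro exI allI impI conjI)
  fix m P F assume A: "valid_instance m P F \<and> monotonic_prefs m P"
  then show "decide_stable m P F = stable m P F" using correct by blast
  define N where "N = input_size m P F + 1"
  have lP: "length P = length F" using A by (simp add: valid_instance_def)
  have N1: "1 \<le> N" and nN: "length F \<le> N" and mN: "m \<le> N" unfolding N_def input_size_def by auto
  have BN: "\<forall>L\<in>set P. length L \<le> N"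
  proof
    fix L assume "L \<in> set P"
    then have "length L \<le> sum_list (map length P)" by (simp add: member_le_sum_list)
    then show "length L \<le> N" unfolding N_def input_size_def by simp
  qed
  have "(length P + 1) * (length F + 2*N + 5) \<le> (N+1)*(3*N+5)"
    using lP nN by (intro mult_le_mono) auto
  then have X: "\<forall>s S. T_count_movers P F F S s \<le> (N+1)*(3*N+5)"
    using T_cm_le[OF BN, of F] by (meson le_trans)
  have Y: "\<forall>S' c. T_blockS P F S' c (length F) \<le> (N+1)*((N+1)*(3*N+5)+1)"
  proof (intro allI)
    fix S' c
    have "T_blockS P F S' c (length F) \<le> (length F + 1)*((N+1)*(3*N+5)+1)"
      by (rule T_blockS_le) (use X in blast)
    also have "\<dots> \<le> (N+1)*((N+1)*(3*N+5)+1)" using nN by (intro mult_le_mono) auto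
    finally show "T_blockS P F S' c (length F) \<le> (N+1)*((N+1)*(3*N+5)+1)" .
  qed
  have "T_blockAny P F m \<le> (m+1)*(2*length F + (N+1)*((N+1)*(3*N+5)+1) + 3)"
    using T_blockAny_le[OF Y] .
  also have "\<dots> \<le> (N+1)*(2*N+(N+1)*((N+1)*(3*N+5)+1)+3)"
    using mN nN by (intro mult_le_mono) auto
  finally have "T_decide_stable m P F \<le> (N+1)*(2*N+(N+1)*((N+1)*(3*N+5)+1)+3)+1" by simp
  also have "\<dots> \<le> 100 * N^4" using poly N1 by blast
  finally show "T_decide_stable m P F \<le> 100 * (input_size m P F + 1) ^ 4" unfolding N_def .
qed

end
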